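(* Let $p\in\{1,2\}$, let $s\ge 1$ be an integer ($s\ge 2$ if $p=2$), let $\varepsilon\ge 0$, and let the coefficients $\omega_0,\omega_1,b_j,a_j,\mu_j,\nu_j,\kappa_j,\gamma_j,c_j$ and the polynomials $R_k$ be as defined in the context. Let $A\in\mathbb{R}^{n\times n}$, $\Delta t>0$, let $\bm{r}_1,\dots,\bm{r}_s\in\mathbb{R}^n$, and define $$\bm{d}_0=\bm{0},\qquad \bm{d}_1=\bm{r}_1,\qquad \bm{d}_j=\nu_j\bm{d}_{j-1}+\kappa_j\bm{d}_{j-2}+\mu_j\,\Delta t A\bm{d}_{j-1}+\bm{r}_j,\quad j=2,\dots,s.$$ Then: (i) With $I$ the $n\times n$ identity matrix, $$\bm{d}_k=\sum_{j=1}^k\frac{b_k}{b_j}U_{k-j}(\omega_0 I+\omega_1\Delta t A)\,\bm{r}_j,\qquad k=1,\dots,s.$$ (ii) For $k=1,\dots,s$, the following identities hold (for $z\neq 0$, and hence as polynomial identities, so that the left-hand sides are polynomials in $z$): $$\overline{R}_k(z):=\frac{R_k(z)-1}{z}=\sum_{j=1}^k\frac{b_k}{b_j}U_{k-j}(\omega_0+\omega_1 z)(\mu_j+\gamma_j),$$ $$\widetilde{R}_k(z):=\frac{R_k(z)-1-c_kz}{z^2}=\sum_{j=2}^k\frac{b_k}{b_j}U_{k-j}(\omega_0+\omega_1 z)\,\mu_j c_{j-1}.$$ (iii) If $\bm{r}\in\mathbb{R}^n$ and $\bm{r}_j=(\mu_j+\gamma_j)\bm{r}$ for $j=1,\dots,s$,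 then $\bm{d}_k=\overline{R}_k(\Delta t A)\bm{r}$ for $k=1,\dots,s$.
   Context: Chebyshev polynomials: $T_0(x)=1$, $T_1(x)=x$, $T_j(x)=2xT_{j-1}(x)-T_{j-2}(x)$; $U_0(x)=1$, $U_1(x)=2x$, $U_j(x)=2xU_{j-1}(x)-U_{j-2}(x)$ for $j\ge 2$. For a square matrix $M$, $U_j(M)$ denotes the matrix polynomial. Runge–Kutta–Chebyshev (RKC) coefficients of order $p\in\{1,2\}$ with $s$ stages and damping $\varepsilon\ge0$: $\omega_0=1+\varepsilon/s^2$. If $p=1$: $\omega_1=T_s(\omega_0)/T_s'(\omega_0)$ and $b_j=1/T_j(\omega_0)$ for $j=0,\dots,s$. If $p=2$: $\omega_1=T_s'(\omega_0)/T_s''(\omega_0)$, $b_j=T_j''(\omega_0)/T_j'(\omega_0)^2$ for $j=2,\dots,s$, and $b_0=b_1=b_2$. In both cases $a_j=1-b_jT_j(\omega_0)$ for $j=0,\dots,s$; $\mu_1=b_1\omega_1$, $\gamma_1=0$, and for $j=2,\dots,s$: $\mu_j=2\omega_1b_j/b_{j-1}$, $\nu_j=2\omega_0 b_j/b_{j-1}$, $\kappa_j=-b_j/b_{j-2}$, $\gamma_j=-\mu_j a_{j-1}$. Also $c_0=0$, $c_1=\mu_1$, $c_j=\nu_jc_{j-1}+\kappa_jc_{j-2}+\mu_j+\gamma_j$ for $j=2,\dots,s$. The internal stability polynomials are $R_k(z)=a_k+b_kT_k(\omega_0+\omega_1 z)$, $k=0,\dots,s$. *)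

theory Defs
  imports "HOL-Analysis.Analysis" "HOL-Computational_Algebra.Polynomial"
begin

fun cheb_T :: "nat \<Rightarrow> real poly" where
  "cheb_T 0 = 1"
| "cheb_T (Suc 0) = [:0, 1:]"
| "cheb_T (Suc (Suc j)) = [:0, 2:] * cheb_T (Suc j) - cheb_T j"

fun cheb_U :: "nat \<Rightarrow> real poly" where
  "cheb_U 0 = 1"
| "cheb_U (Suc 0) = [:0, 2:]"
| "cheb_U (Suc (Suc j)) = [:0, 2:] * cheb_U (Suc j) - cheb_U j"

fun cheb_U_mat :: "nat \<Rightarrow> real^'n^'n \<Rightarrow> real^'n^'n" where
  "cheb_U_mat 0 M = mat 1"
| "cheb_U_mat (Suc 0) M = (2::real) *\<^sub>R M"
| "cheb_U_mat (Suc (Suc j)) M = (2::real) *\<^sub>R (M ** cheb_U_mat (Suc j) M) - cheb_U_mat j M"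

fun mat_pow :: "real^'n^'n \<Rightarrow> nat \<Rightarrow> real^'n^'n" where
  "mat_pow M 0 = mat 1"
| "mat_pow M (Suc k) = M ** mat_pow M k"

definition poly_mat :: "real poly \<Rightarrow> real^'n^'n \<Rightarrow> real^'n^'n" where
  "poly_mat q M = (\<Sum>i\<le>degree q. coeff q i *\<^sub>R mat_pow M i)"

definition rkc_omega0 :: "nat \<Rightarrow> real \<Rightarrow> real" where
  "rkc_omega0 s eps = 1 + eps / (real s)^2"

definition rkc_omega1 :: "nat \<Rightarrow> nat \<Rightarrow> real \<Rightarrow> real" where
  "rkc_omega1 p s eps =
     (let w0 = rkc_omega0 s eps in
      if p = 1 then poly (cheb_T s) w0 / poly (pderiv (cheb_T s)) w0
      else poly (pderiv (cheb_T s)) w0 / poly (pderiv (pderiv (cheb_T s))) w0)"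

definition rkc_b :: "nat \<Rightarrow> nat \<Rightarrow> real \<Rightarrow> nat \<Rightarrow> real" where
  "rkc_b p s eps j =
     (let w0 = rkc_omega0 s eps;
          b2 = (\<lambda>i. poly (pderiv (pderiv (cheb_T i))) w0 / (poly (pderiv (cheb_T i)) w0)^2) in
      if p = 1 then 1 / poly (cheb_T j) w0
      else if j < 2 then b2 2 else b2 j)"

definition rkc_a :: "nat \<Rightarrow> nat \<Rightarrow> real \<Rightarrow> nat \<Rightarrow> real" where
  "rkc_a p s eps j = 1 - rkc_b p s eps j * poly (cheb_T j) (rkc_omega0 s eps)"

definition rkc_mu :: "nat \<Rightarrow> nat \<Rightarrow> real \<Rightarrow> nat \<Rightarrow> real" where
  "rkc_mu p s eps j =
     (if j = 1 then rkc_b p s eps 1 * rkc_omega1 p s eps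
      else 2 * rkc_omega1 p s eps * rkc_b p s eps j / rkc_b p s eps (j - 1))"

definition rkc_nu :: "nat \<Rightarrow> nat \<Rightarrow> real \<Rightarrow> nat \<Rightarrow> real" where
  "rkc_nu p s eps j = 2 * rkc_omega0 s eps * rkc_b p s eps j / rkc_b p s eps (j - 1)"

definition rkc_kappa :: "nat \<Rightarrow> nat \<Rightarrow> real \<Rightarrow> nat \<Rightarrow> real" where
  "rkc_kappa p s eps j = - rkc_b p s eps j / rkc_b p s eps (j - 2)"

definition rkc_gamma :: "nat \<Rightarrow> nat \<Rightarrow> real \<Rightarrow> nat \<Rightarrow> real" where
  "rkc_gamma p s eps j =
     (if j = 1 then 0 else - rkc_mu p s eps j * rkc_a p s eps (j - 1))"

fun rkc_c :: "nat \<Rightarrow> nat \<Rightarrow> real \<Rightarrow> nat \<Rightarrow> real" where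
  "rkc_c p s eps 0 = 0"
| "rkc_c p s eps (Suc 0) = rkc_mu p s eps 1"
| "rkc_c p s eps (Suc (Suc j)) =
     rkc_nu p s eps (j + 2) * rkc_c p s eps (Suc j) + rkc_kappa p s eps (j + 2) * rkc_c p s eps j
     + rkc_mu p s eps (j + 2) + rkc_gamma p s eps (j + 2)"

definition rkc_R :: "nat \<Rightarrow> nat \<Rightarrow> real \<Rightarrow> nat \<Rightarrow> real poly" where
  "rkc_R p s eps k =
     [:rkc_a p s eps k:] + smult (rkc_b p s eps k)
        (pcompose (cheb_T k) [:rkc_omega0 s eps, rkc_omega1 p s eps:])"

definition rkc_Rbar :: "nat \<Rightarrow> nat \<Rightarrow> real \<Rightarrow> nat \<Rightarrow> real poly" where
  "rkc_Rbar p s eps k = (rkc_R p s eps k - 1) div [:0, 1:]"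

definition rkc_Rtilde :: "nat \<Rightarrow> nat \<Rightarrow> real \<Rightarrow> nat \<Rightarrow> real poly" where
  "rkc_Rtilde p s eps k = (rkc_R p s eps k - 1 - [:0, rkc_c p s eps k:]) div [:0, 0, 1:]"

fun rkc_d :: "nat \<Rightarrow> nat \<Rightarrow> real \<Rightarrow> real \<Rightarrow> real^'n^'n \<Rightarrow> (nat \<Rightarrow> real^'n) \<Rightarrow> nat \<Rightarrow> real^'n" where
  "rkc_d p s eps dt A r 0 = 0"
| "rkc_d p s eps dt A r (Suc 0) = r 1"
| "rkc_d p s eps dt A r (Suc (Suc j)) =
     rkc_nu p s eps (j + 2) *\<^sub>R rkc_d p s eps dt A r (Suc j)
     + rkc_kappa p s eps (j + 2) *\<^sub>R rkc_d p s eps dt A r j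
     + (rkc_mu p s eps (j + 2) * dt) *\<^sub>R (A *v rkc_d p s eps dt A r (Suc j))
     + r (j + 2)"

end

theory Submission imports Defs begin

lemma closed_form:
  fixes e r :: "nat \<Rightarrow> 'v::real_vector" and L :: "'v \<Rightarrow> 'v" and U :: "nat \<Rightarrow> 'v \<Rightarrow> 'v"
    and b :: "nat \<Rightarrow> real"
  assumes lin: "linear L"
    and U0: "\<And>x. U 0 x = x" and U1: "\<And>x. U 1 x = 2 *\<^sub>R L x"
    and U2: "\<And>n x. U (Suc (Suc n)) x = 2 *\<^sub>R L (U (Suc n) x) - U n x"
    and bnz: "\<And>j. j \<le> s \<Longrightarrow> b j \<noteq> 0"
    and e0: "e 0 = 0" and e1: "e 1 = r 1"
    and erec: "\<And>k. k + 2 \<le> s \<Longrightarrow>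
       e (k + 2) = (2 * b (k + 2) / b (k + 1)) *\<^sub>R L (e (k + 1)) - (b (k + 2) / b k) *\<^sub>R e k + r (k + 2)"
  shows "k \<le> s \<Longrightarrow> e k = (\<Sum>j=1..k. (b k / b j) *\<^sub>R U (k - j) (r j))"
proof (induction k rule: nat_less_induct)
  case (1 k)
  show ?case
  proof (cases k)
    case 0 then show ?thesis by (simp add: e0)
  next
    case (Suc k')
    show ?thesis
    proof (cases k')
      case 0 then show ?thesis using Suc 1 bnz[of 1] using e1 by (simp add: U0)
    next
      case (Suc m)
      have ks: "k = Suc (Suc m)" using Suc \<open>k = Suc k'\<close> by simp
      have le: "m + 2 \<le> s" using 1 ks by simp
      have b0: "b m \<noteq> 0" "b (Suc m) \<noteq> 0" "b (Suc (Suc m)) \<noteq> 0" using bnz le by auto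
      have IH1: "e (Suc m) = (\<Sum>j=1..Suc m. (b (Suc m) / b j) *\<^sub>R U (Suc m - j) (r j))"
        using 1 ks by simp
      have IH0: "e m = (\<Sum>j=1..m. (b m / b j) *\<^sub>R U (m - j) (r j))"
        using 1 ks by simp
      have A: "(2 * b (m + 2) / b (m + 1)) *\<^sub>R L (e (m + 1)) =
          (\<Sum>j=1..m. (b (m+2) / b j) *\<^sub>R (2 *\<^sub>R L (U (Suc (m - j)) (r j))))
          + (b (m+2) / b (m+1)) *\<^sub>R (2 *\<^sub>R L (r (Suc m)))"
      proof -
        have "(2 * b (m + 2) / b (m + 1)) *\<^sub>R L (e (m + 1)) =
           (\<Sum>j=1..Suc m. (2 * b (m + 2) / b (m + 1)) *\<^sub>R ((b (Suc m) / b j) *\<^sub>R L (U (Suc m - j) (r j))))"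
        proof -
          have "L (e (Suc m)) = (\<Sum>j=1..Suc m. (b (Suc m) / b j) *\<^sub>R L (U (Suc m - j) (r j)))"
            by (simp only: IH1 linear_sum[OF lin] linear_scale[OF lin])
          then show ?thesis by (simp only: Suc_eq_plus1[symmetric] scaleR_sum_right)
        qed
        also have "\<dots> = (\<Sum>j=1..Suc m. (b (m+2) / b j) *\<^sub>R (2 *\<^sub>R L (U (Suc m - j) (r j))))"
          by (rule sum.cong) (use b0 in auto)
        also have "\<dots> = (\<Sum>j=1..m. (b (m+2) / b j) *\<^sub>R (2 *\<^sub>R L (U (Suc (m - j)) (r j))))
          + (b (m+2) / b (m+1)) *\<^sub>R (2 *\<^sub>R L (r (Suc m)))"
          by (simp add: U0 Suc_diff_le)
        finally show ?thesis .
      qed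
      have B: "(b (m + 2) / b m) *\<^sub>R e m = (\<Sum>j=1..m. (b (m+2) / b j) *\<^sub>R U (m - j) (r j))"
        unfolding IH0 scaleR_sum_right by (rule sum.cong) (use b0 in auto)
      have C: "(\<Sum>j=1..Suc (Suc m). (b (Suc (Suc m)) / b j) *\<^sub>R U (Suc (Suc m) - j) (r j))
        = (\<Sum>j=1..m. (b (m+2) / b j) *\<^sub>R U (Suc (Suc (m - j))) (r j))
          + (b (m+2) / b (m+1)) *\<^sub>R U 1 (r (m+1)) + r (m+2)"
        using b0 by (simp add: U0 Suc_diff_le)
      have D: "(\<Sum>j=1..m. (b (m+2) / b j) *\<^sub>R U (Suc (Suc (m - j))) (r j))
         = (\<Sum>j=1..m. (b (m+2) / b j) *\<^sub>R (2 *\<^sub>R L (U (Suc (m - j)) (r j))))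
           - (\<Sum>j=1..m. (b (m+2) / b j) *\<^sub>R U (m - j) (r j))"
        by (simp add: U2 scaleR_diff_right sum_subtractf)
      show ?thesis unfolding ks C D using erec[OF le] A B using U1[of "r (Suc m)"] by (simp add: algebra_simps)
    qed
  qed
qed

lemma cheb_T_rec: "poly (cheb_T (Suc (Suc j))) x = 2 * x * poly (cheb_T (Suc j)) x - poly (cheb_T j) x"
  by simp
lemma cheb_U_rec: "poly (cheb_U (Suc (Suc j))) x = 2 * x * poly (cheb_U (Suc j)) x - poly (cheb_U j) x"
  by simp
lemma cheb_T_d1: "poly (pderiv (cheb_T (Suc (Suc j)))) x
   = 2 * poly (cheb_T (Suc j)) x + 2 * x * poly (pderiv (cheb_T (Suc j))) x - poly (pderiv (cheb_T j)) x"
  by (simp add: pderiv_mult pderiv_diff pderiv_pCons pderiv_smult algebra_simps)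
lemma cheb_T_d2: "poly (pderiv (pderiv (cheb_T (Suc (Suc j))))) x
   = 4 * poly (pderiv (cheb_T (Suc j))) x + 2 * x * poly (pderiv (pderiv (cheb_T (Suc j)))) x
     - poly (pderiv (pderiv (cheb_T j))) x"
  by (simp add: pderiv_mult pderiv_diff pderiv_pCons pderiv_add pderiv_smult algebra_simps)

lemma cheb_T_mono:
  assumes "x \<ge> 1"
  shows "1 \<le> poly (cheb_T j) x \<and> poly (cheb_T j) x \<le> poly (cheb_T (Suc j)) x
    \<and> 0 \<le> poly (pderiv (cheb_T j)) x \<and> poly (pderiv (cheb_T j)) x \<le> poly (pderiv (cheb_T (Suc j))) x
    \<and> 0 \<le> poly (pderiv (pderiv (cheb_T j))) x
    \<and> poly (pderiv (pderiv (cheb_T j))) x \<le> poly (pderiv (pderiv (cheb_T (Suc j)))) x"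
proof (induction j)
  case 0
  then show ?case using assms by (simp add: pderiv_pCons)
next
  case (Suc j)
  let ?a = "poly (cheb_T (Suc j)) x" and ?b = "poly (pderiv (cheb_T (Suc j))) x"
    and ?c = "poly (pderiv (pderiv (cheb_T (Suc j)))) x"
  have ge: "?a \<ge> 1" "?b \<ge> 0" "?c \<ge> 0" using Suc by auto
  have f: "2 * x * ?a \<ge> 2 * ?a" "2 * x * ?b \<ge> 2 * ?b" "2 * x * ?c \<ge> 2 * ?c"
    using ge assms mult_right_mono[of 1 x] by auto
  show ?case using Suc ge f unfolding cheb_T_rec cheb_T_d1 cheb_T_d2
    by (intro conjI) linarith+
qed

lemma cheb_T_d1_pos:
  assumes "x \<ge> 1" "j \<ge> 1"
  shows "poly (pderiv (cheb_T j)) x \<ge> 1"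
proof -
  have "poly (pderiv (cheb_T 1)) x \<le> poly (pderiv (cheb_T j)) x"
    using lift_Suc_mono_le[of "\<lambda>j. poly (pderiv (cheb_T j)) x"] cheb_T_mono[OF assms(1)] assms(2) by blast
  then show ?thesis by (simp add: pderiv_pCons)
qed

lemma cheb_T_d2_pos:
  assumes "x \<ge> 1" "j \<ge> 2"
  shows "poly (pderiv (pderiv (cheb_T j))) x \<ge> 4"
proof -
  have "poly (pderiv (pderiv (cheb_T 2))) x \<le> poly (pderiv (pderiv (cheb_T j))) x"
    using lift_Suc_mono_le[of "\<lambda>j. poly (pderiv (pderiv (cheb_T j))) x"] cheb_T_mono[OF assms(1)] assms(2) by blast
  then show ?thesis by (simp add: numeral_2_eq_2 pderiv_pCons pderiv_mult pderiv_diff)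
qed

lemma omega0_ge: "eps \<ge> 0 \<Longrightarrow> rkc_omega0 s eps \<ge> 1"
  by (simp add: rkc_omega0_def)

lemma rkc_b_nz:
  assumes "eps \<ge> 0"
  shows "rkc_b p s eps j \<noteq> 0"
proof -
  let ?w = "rkc_omega0 s eps"
  have w: "?w \<ge> 1" using omega0_ge[OF assms] .
  have T: "poly (cheb_T j) ?w \<ge> 1" using cheb_T_mono[OF w] by blast
  have b2: "poly (pderiv (pderiv (cheb_T i))) ?w / (poly (pderiv (cheb_T i)) ?w)^2 \<noteq> 0" if "i \<ge> 2" for i
    using cheb_T_d1_pos[OF w, of i] cheb_T_d2_pos[OF w that] that by simp
  show ?thesis unfolding rkc_b_def Let_def using T b2[of j] b2[of 2] by auto
qed

lemma Mv_expand:
  fixes A :: "real^'n^'n"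
  shows "(w0 *\<^sub>R mat 1 + c *\<^sub>R A) *v x = w0 *\<^sub>R x + c *\<^sub>R (A *v x)"
proof -
  have "(w0 *\<^sub>R mat 1 + c *\<^sub>R A) *v x = (w0 *\<^sub>R mat 1) *v x + (c *\<^sub>R A) *v x"
    by (rule matrix_vector_mult_add_rdistrib)
  also have "(w0 *\<^sub>R mat 1) *v x = w0 *\<^sub>R (mat 1 *v x)" by (rule scaleR_matrix_vector_assoc[symmetric])
  also have "(c *\<^sub>R A) *v x = c *\<^sub>R (A *v x)" by (rule scaleR_matrix_vector_assoc[symmetric])
  finally show ?thesis by simp
qed

lemma part1:
  fixes A :: "real^'n^'n" and r :: "nat \<Rightarrow> real^'n"
  assumes "eps \<ge> 0" "k \<le> s"
  shows "rkc_d p s eps dt A r k =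
        (\<Sum>j=1..k. (rkc_b p s eps k / rkc_b p s eps j) *\<^sub>R
           (cheb_U_mat (k - j) (rkc_omega0 s eps *\<^sub>R mat 1 + (rkc_omega1 p s eps * dt) *\<^sub>R A) *v r j))"
proof -
  let ?M = "rkc_omega0 s eps *\<^sub>R mat 1 + (rkc_omega1 p s eps * dt) *\<^sub>R A"
  let ?b = "rkc_b p s eps"
  show ?thesis
  proof (rule closed_form[where L="(*v) ?M" and U="\<lambda>n x. cheb_U_mat n ?M *v x" and b="?b" and s=s, OF _ _ _ _ _ _ _ _ assms(2)])
    show "linear ((*v) ?M)" by (rule matrix_vector_mul_linear)
    show "\<And>x. cheb_U_mat 0 ?M *v x = x" by simp
    show "\<And>x. cheb_U_mat 1 ?M *v x = 2 *\<^sub>R (?M *v x)"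
      by (simp add: scaleR_matrix_vector_assoc)
    show "\<And>n x. cheb_U_mat (Suc (Suc n)) ?M *v x = 2 *\<^sub>R (?M *v (cheb_U_mat (Suc n) ?M *v x)) - cheb_U_mat n ?M *v x"
      by (simp add: matrix_vector_mult_diff_rdistrib scaleR_matrix_vector_assoc matrix_vector_mul_assoc)
    show "\<And>j. j \<le> s \<Longrightarrow> ?b j \<noteq> 0" using rkc_b_nz[OF assms(1)] by blast
    show "rkc_d p s eps dt A r 0 = 0" by simp
    show "rkc_d p s eps dt A r 1 = r 1" by simp
    fix k assume "k + 2 \<le> s"
    have nz: "?b k \<noteq> 0" "?b (Suc k) \<noteq> 0" using rkc_b_nz[OF assms(1)] by auto
    show "rkc_d p s eps dt A r (k + 2) = (2 * ?b (k + 2) / ?b (k + 1)) *\<^sub>R (?M *v rkc_d p s eps dt A r (k + 1))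
        - (?b (k + 2) / ?b k) *\<^sub>R rkc_d p s eps dt A r k + r (k + 2)"
      unfolding Mv_expand using nz
      by (simp add: rkc_nu_def rkc_kappa_def rkc_mu_def scaleR_add_right scaleR_scaleR algebra_simps)
  qed
qed

lemma R_eval: "poly (rkc_R p s eps k) z = 1 + rkc_b p s eps k *
   (poly (cheb_T k) (rkc_omega0 s eps + rkc_omega1 p s eps * z) - poly (cheb_T k) (rkc_omega0 s eps))"
  by (simp add: rkc_R_def rkc_a_def poly_pcompose algebra_simps)

lemma alg1:
  fixes b0 b1 b2 :: real
  assumes "b1 \<noteq> 0" "b0 \<noteq> 0"
  shows "1 + b2 * ((2*(w0+w1*z)*X1 - X0) - (2*w0*Y1 - Y0)) - 1 = (2*b2/b1) * ((w0+w1*z) * (1 + b1*(X1 - Y1) - 1))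
     - (b2/b0)*(1 + b0*(X0-Y0) - 1) + (2*w1*b2/b1 + -(2*w1*b2/b1) * (1 - b1*Y1)) * z"
  using assms by (simp add: field_simps)

lemma T2: "poly (cheb_T (k+2)) x = 2 * x * poly (cheb_T (k+1)) x - poly (cheb_T k) x"
  by simp

lemma g_eq: "rkc_mu p s eps (k+2) + rkc_gamma p s eps (k+2) =
     2 * rkc_omega1 p s eps * rkc_b p s eps (k+2) / rkc_b p s eps (k+1) +
     - (2 * rkc_omega1 p s eps * rkc_b p s eps (k+2) / rkc_b p s eps (k+1)) * (1 - rkc_b p s eps (k+1) * poly (cheb_T (k+1)) (rkc_omega0 s eps))"
  by (simp add: rkc_mu_def rkc_gamma_def rkc_a_def)

lemma R_rec:
  assumes "eps \<ge> 0"
  shows "poly (rkc_R p s eps (k+2)) z - 1 =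
    (2 * rkc_b p s eps (k+2) / rkc_b p s eps (k+1)) * ((rkc_omega0 s eps + rkc_omega1 p s eps * z) * (poly (rkc_R p s eps (k+1)) z - 1))
    - (rkc_b p s eps (k+2) / rkc_b p s eps k) * (poly (rkc_R p s eps k) z - 1)
    + (rkc_mu p s eps (k+2) + rkc_gamma p s eps (k+2)) * z"
proof -
  have nz: "rkc_b p s eps (k+1) \<noteq> 0" "rkc_b p s eps k \<noteq> 0" using rkc_b_nz[OF assms] by auto
  show ?thesis unfolding R_eval g_eq T2 by (rule alg1[OF nz])
qed

lemma lin_mult: "linear ((*) (c::real))"
  by (simp add: linear_iff algebra_simps)

lemma part2_pt:
  assumes "eps \<ge> 0" "k \<le> s"
  shows "poly (rkc_R p s eps k) z - 1 = (\<Sum>j=1..k. (rkc_b p s eps k / rkc_b p s eps j) *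
     (poly (cheb_U (k-j)) (rkc_omega0 s eps + rkc_omega1 p s eps * z) * ((rkc_mu p s eps j + rkc_gamma p s eps j) * z)))"
proof -
  let ?x = "rkc_omega0 s eps + rkc_omega1 p s eps * z"
  have "poly (rkc_R p s eps k) z - 1 = (\<Sum>j=1..k. (rkc_b p s eps k / rkc_b p s eps j) *\<^sub>R
     (poly (cheb_U (k-j)) ?x * ((rkc_mu p s eps j + rkc_gamma p s eps j) * z)))"
  proof (rule closed_form[where L="(*) ?x" and U="\<lambda>n y. poly (cheb_U n) ?x * y" and b="rkc_b p s eps" and s=s, OF _ _ _ _ _ _ _ _ assms(2)])
    show "linear ((*) ?x)" by (rule lin_mult)
    show "\<And>y. poly (cheb_U 0) ?x * y = y" by simp
    show "\<And>y. poly (cheb_U 1) ?x * y = 2 *\<^sub>R (?x * y)" by simp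
    show "\<And>n y. poly (cheb_U (Suc (Suc n))) ?x * y = 2 *\<^sub>R (?x * (poly (cheb_U (Suc n)) ?x * y)) - poly (cheb_U n) ?x * y"
      by (simp add: algebra_simps)
    show "\<And>j. j \<le> s \<Longrightarrow> rkc_b p s eps j \<noteq> 0" using rkc_b_nz[OF assms(1)] by blast
    show "poly (rkc_R p s eps 0) z - 1 = 0" by (simp add: R_eval)
    show "poly (rkc_R p s eps 1) z - 1 = (rkc_mu p s eps 1 + rkc_gamma p s eps 1) * z"
      by (simp add: R_eval rkc_mu_def rkc_gamma_def algebra_simps)
    fix k assume "k + 2 \<le> s"
    show "poly (rkc_R p s eps (k+2)) z - 1 = (2 * rkc_b p s eps (k + 2) / rkc_b p s eps (k + 1)) *\<^sub>R (?x * (poly (rkc_R p s eps (k+1)) z - 1))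
        - (rkc_b p s eps (k + 2) / rkc_b p s eps k) *\<^sub>R (poly (rkc_R p s eps k) z - 1) + (rkc_mu p s eps (k+2) + rkc_gamma p s eps (k+2)) * z"
      using R_rec[OF assms(1)] by simp
  qed
  then show ?thesis by simp
qed

lemma alg2:
  fixes b0 b1 b2 :: real
  assumes "b1 \<noteq> 0" "b0 \<noteq> 0"
    and "E2 = (2*b2/b1)*((w0+w1*z)*E1) - (b2/b0)*E0 + G*z"
    and "C2 = (2*w0*b2/b1)*C1 + (- b2/b0)*C0 + G"
    and "M = 2*w1*b2/b1"
  shows "E2 - C2*z = (2*b2/b1)*((w0+w1*z)*(E1 - C1*z)) - (b2/b0)*(E0 - C0*z) + M*C1*z^2"
  using assms(1,2) unfolding assms(3-5) by (simp add: field_simps power2_eq_square)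

lemma part2b_pt:
  assumes "eps \<ge> 0" "k \<le> s"
  shows "poly (rkc_R p s eps k) z - 1 - rkc_c p s eps k * z = (\<Sum>j=1..k. (rkc_b p s eps k / rkc_b p s eps j) *
     (poly (cheb_U (k-j)) (rkc_omega0 s eps + rkc_omega1 p s eps * z) *
       (if j = 1 then 0 else rkc_mu p s eps j * rkc_c p s eps (j - 1) * z^2)))"
proof -
  let ?x = "rkc_omega0 s eps + rkc_omega1 p s eps * z"
  have "poly (rkc_R p s eps k) z - 1 - rkc_c p s eps k * z = (\<Sum>j=1..k. (rkc_b p s eps k / rkc_b p s eps j) *\<^sub>R
     (poly (cheb_U (k-j)) ?x * (if j = 1 then 0 else rkc_mu p s eps j * rkc_c p s eps (j - 1) * z^2)))"
  proof (rule closed_form[where L="(*) ?x" and U="\<lambda>n y. poly (cheb_U n) ?x * y" and b="rkc_b p s eps" and s=s, OF _ _ _ _ _ _ _ _ assms(2)])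
    show "linear ((*) ?x)" by (rule lin_mult)
    show "\<And>y. poly (cheb_U 0) ?x * y = y" by simp
    show "\<And>y. poly (cheb_U 1) ?x * y = 2 *\<^sub>R (?x * y)" by simp
    show "\<And>n y. poly (cheb_U (Suc (Suc n))) ?x * y = 2 *\<^sub>R (?x * (poly (cheb_U (Suc n)) ?x * y)) - poly (cheb_U n) ?x * y"
      by (simp add: algebra_simps)
    show "\<And>j. j \<le> s \<Longrightarrow> rkc_b p s eps j \<noteq> 0" using rkc_b_nz[OF assms(1)] by blast
    show "poly (rkc_R p s eps 0) z - 1 - rkc_c p s eps 0 * z = 0" by (simp add: R_eval)
    show "poly (rkc_R p s eps 1) z - 1 - rkc_c p s eps 1 * z = (if (1::nat) = 1 then 0 else rkc_mu p s eps 1 * rkc_c p s eps (1 - 1) * z^2)"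
      by (simp add: R_eval rkc_mu_def rkc_gamma_def algebra_simps)
    fix k assume "k + 2 \<le> s"
    have nz: "rkc_b p s eps (k+1) \<noteq> 0" "rkc_b p s eps k \<noteq> 0" using rkc_b_nz[OF assms(1)] by auto
    have c2: "rkc_c p s eps (k+2) = (2 * rkc_omega0 s eps * rkc_b p s eps (k+2) / rkc_b p s eps (k+1)) * rkc_c p s eps (k+1)
       + (- rkc_b p s eps (k+2) / rkc_b p s eps k) * rkc_c p s eps k + (rkc_mu p s eps (k+2) + rkc_gamma p s eps (k+2))"
      by (simp add: rkc_nu_def rkc_kappa_def)
    have m2: "rkc_mu p s eps (k+2) = 2 * rkc_omega1 p s eps * rkc_b p s eps (k+2) / rkc_b p s eps (k+1)"
      by (simp add: rkc_mu_def)
    have "poly (rkc_R p s eps (k+2)) z - 1 - rkc_c p s eps (k+2) * z = (2 * rkc_b p s eps (k + 2) / rkc_b p s eps (k + 1)) * (?x * (poly (rkc_R p s eps (k+1)) z - 1 - rkc_c p s eps (k+1) * z))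
        - (rkc_b p s eps (k + 2) / rkc_b p s eps k) * (poly (rkc_R p s eps k) z - 1 - rkc_c p s eps k * z) + rkc_mu p s eps (k+2) * rkc_c p s eps (k+1) * z^2"
      by (rule alg2[OF nz R_rec[OF assms(1)] c2 m2])
    then show "poly (rkc_R p s eps (k+2)) z - 1 - rkc_c p s eps (k+2) * z = (2 * rkc_b p s eps (k + 2) / rkc_b p s eps (k + 1)) *\<^sub>R (?x * (poly (rkc_R p s eps (k+1)) z - 1 - rkc_c p s eps (k+1) * z))
        - (rkc_b p s eps (k + 2) / rkc_b p s eps k) *\<^sub>R (poly (rkc_R p s eps k) z - 1 - rkc_c p s eps k * z) + (if k + 2 = 1 then 0 else rkc_mu p s eps (k+2) * rkc_c p s eps (k + 2 - 1) * z^2)"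
      by simp
  qed
  then show ?thesis by simp
qed

definition Q1 :: "nat \<Rightarrow> nat \<Rightarrow> real \<Rightarrow> nat \<Rightarrow> real poly" where
  "Q1 p s eps k = (\<Sum>j=1..k. smult (rkc_b p s eps k / rkc_b p s eps j * (rkc_mu p s eps j + rkc_gamma p s eps j))
      (pcompose (cheb_U (k-j)) [:rkc_omega0 s eps, rkc_omega1 p s eps:]))"

definition Q2 :: "nat \<Rightarrow> nat \<Rightarrow> real \<Rightarrow> nat \<Rightarrow> real poly" where
  "Q2 p s eps k = (\<Sum>j=2..k. smult (rkc_b p s eps k / rkc_b p s eps j * (rkc_mu p s eps j * rkc_c p s eps (j - 1)))
      (pcompose (cheb_U (k-j)) [:rkc_omega0 s eps, rkc_omega1 p s eps:]))"

lemma poly_Q1: "poly (Q1 p s eps k) z = (\<Sum>j=1..k. rkc_b p s eps k / rkc_b p s eps j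
             * poly (cheb_U (k - j)) (rkc_omega0 s eps + rkc_omega1 p s eps * z)
             * (rkc_mu p s eps j + rkc_gamma p s eps j))"
  unfolding Q1_def poly_sum by (rule sum.cong) (simp_all add: poly_pcompose algebra_simps)

lemma poly_Q2: "poly (Q2 p s eps k) z = (\<Sum>j=2..k. rkc_b p s eps k / rkc_b p s eps j
             * poly (cheb_U (k - j)) (rkc_omega0 s eps + rkc_omega1 p s eps * z)
             * (rkc_mu p s eps j * rkc_c p s eps (j - 1)))"
  unfolding Q2_def poly_sum by (rule sum.cong) (simp_all add: poly_pcompose algebra_simps)

lemma R_Q1:
  assumes "eps \<ge> 0" "k \<le> s"
  shows "rkc_R p s eps k - 1 = [:0, 1:] * Q1 p s eps k"
proof -
  have "poly (rkc_R p s eps k - 1) z = poly ([:0, 1:] * Q1 p s eps k) z" for z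
    unfolding poly_diff poly_1 part2_pt[OF assms] poly_mult poly_Q1 sum_distrib_left
    by (rule sum.cong) (simp_all only: mult_ac, simp)
  then show ?thesis using poly_eq_poly_eq_iff by blast
qed

lemma R_Q2:
  assumes "eps \<ge> 0" "k \<le> s"
  shows "rkc_R p s eps k - 1 - [:0, rkc_c p s eps k:] = [:0, 0, 1:] * Q2 p s eps k"
proof -
  have "poly (rkc_R p s eps k - 1 - [:0, rkc_c p s eps k:]) z = poly ([:0, 0, 1:] * Q2 p s eps k) z" for z
  proof -
    have "poly (rkc_R p s eps k - 1 - [:0, rkc_c p s eps k:]) z = poly (rkc_R p s eps k) z - 1 - rkc_c p s eps k * z"
      by (simp add: algebra_simps)
    also have "\<dots> = (\<Sum>j=1..k. (rkc_b p s eps k / rkc_b p s eps j) *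
     (poly (cheb_U (k-j)) (rkc_omega0 s eps + rkc_omega1 p s eps * z) *
       (if j = 1 then 0 else rkc_mu p s eps j * rkc_c p s eps (j - 1) * z^2)))"
      by (rule part2b_pt[OF assms])
    also have "\<dots> = (\<Sum>j=2..k. (rkc_b p s eps k / rkc_b p s eps j) *
     (poly (cheb_U (k-j)) (rkc_omega0 s eps + rkc_omega1 p s eps * z) *
       (rkc_mu p s eps j * rkc_c p s eps (j - 1) * z^2)))"
    proof (cases "k = 0")
      case True then show ?thesis by simp
    next
      case False
      then have "(\<Sum>j=1..k. (rkc_b p s eps k / rkc_b p s eps j) *
     (poly (cheb_U (k-j)) (rkc_omega0 s eps + rkc_omega1 p s eps * z) *
       (if j = 1 then 0 else rkc_mu p s eps j * rkc_c p s eps (j - 1) * z^2))) =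
        0 + (\<Sum>j=Suc 1..k. (rkc_b p s eps k / rkc_b p s eps j) *
     (poly (cheb_U (k-j)) (rkc_omega0 s eps + rkc_omega1 p s eps * z) *
       (if j = 1 then 0 else rkc_mu p s eps j * rkc_c p s eps (j - 1) * z^2)))"
        by (subst sum.atLeast_Suc_atMost) auto
      also have "\<dots> = (\<Sum>j=2..k. (rkc_b p s eps k / rkc_b p s eps j) *
     (poly (cheb_U (k-j)) (rkc_omega0 s eps + rkc_omega1 p s eps * z) *
       (rkc_mu p s eps j * rkc_c p s eps (j - 1) * z^2)))"
        by (simp add: numeral_2_eq_2)
      finally show ?thesis .
    qed
    also have "\<dots> = poly ([:0, 0, 1:] * Q2 p s eps k) z"
      unfolding poly_mult poly_Q2 by (simp add: sum_distrib_left algebra_simps power2_eq_square)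
    finally show ?thesis .
  qed
  then show ?thesis using poly_eq_poly_eq_iff by blast
qed

lemma Rbar_Q1:
  assumes "eps \<ge> 0" "k \<le> s"
  shows "rkc_Rbar p s eps k = Q1 p s eps k"
  unfolding rkc_Rbar_def R_Q1[OF assms] by (rule nonzero_mult_div_cancel_left) simp

lemma Rtilde_Q2:
  assumes "eps \<ge> 0" "k \<le> s"
  shows "rkc_Rtilde p s eps k = Q2 p s eps k"
  unfolding rkc_Rtilde_def R_Q2[OF assms] by (rule nonzero_mult_div_cancel_left) simp

lemma matrix_add_rdistrib':
  fixes A B C :: "real^'n^'n"
  shows "(A + B) ** C = A ** C + B ** C"
  unfolding matrix_matrix_mult_def by (simp add: vec_eq_iff sum.distrib distrib_right)

lemma matrix_mul_sum:
  fixes M :: "real^'n^'n"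
  shows "finite S \<Longrightarrow> M ** sum f S = (\<Sum>i\<in>S. M ** f i)"
  by (induction S rule: finite_induct) (simp_all add: matrix_add_ldistrib)

lemma sum_matrix_vector:
  fixes f :: "'i \<Rightarrow> real^'n^'n"
  shows "finite S \<Longrightarrow> sum f S *v x = (\<Sum>i\<in>S. f i *v x)"
  by (induction S rule: finite_induct) (simp_all add: matrix_vector_mult_add_rdistrib)

lemma poly_mat_ext:
  fixes M :: "real^'n^'n"
  assumes "degree q < m"
  shows "poly_mat q M = (\<Sum>i<m. coeff q i *\<^sub>R mat_pow M i)"
  unfolding poly_mat_def
proof (rule sum.mono_neutral_left)
  show "finite {..<m}" by simp
  show "{..degree q} \<subseteq> {..<m}" using assms by auto
  show "\<forall>i\<in>{..<m} - {..degree q}. coeff q i *\<^sub>R mat_pow M i = 0"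
    by (auto simp: coeff_eq_0)
qed

lemma poly_mat_add:
  fixes M :: "real^'n^'n"
  shows "poly_mat (p + q) M = poly_mat p M + poly_mat q M"
proof -
  let ?n = "Suc (max (degree p) (degree q))"
  have "degree (p + q) < ?n" using degree_add_le_max[of p q] by simp
  then show ?thesis
    using poly_mat_ext[where q=p and m="Suc (max (degree p) (degree q))" and M=M]
      poly_mat_ext[where q=q and m="Suc (max (degree p) (degree q))" and M=M]
      poly_mat_ext[where q="p+q" and m="Suc (max (degree p) (degree q))" and M=M]
    by (simp only: coeff_add scaleR_add_left sum.distrib)
qed

lemma poly_mat_diff:
  fixes M :: "real^'n^'n"
  shows "poly_mat (p - q) M = poly_mat p M - poly_mat q M"
proof -
  let ?n = "Suc (max (degree p) (degree q))"
  have "degree (p - q) < ?n" using degree_diff_le_max[of p q] by simp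
  then show ?thesis
    using poly_mat_ext[where q=p and m="Suc (max (degree p) (degree q))" and M=M]
      poly_mat_ext[where q=q and m="Suc (max (degree p) (degree q))" and M=M]
      poly_mat_ext[where q="p-q" and m="Suc (max (degree p) (degree q))" and M=M]
    by (simp only: coeff_diff scaleR_diff_left sum_subtractf)
qed

lemma poly_mat_smult:
  fixes M :: "real^'n^'n"
  shows "poly_mat (smult c p) M = c *\<^sub>R poly_mat p M"
proof -
  let ?n = "Suc (degree p)"
  have "degree (smult c p) < ?n" using degree_smult_le[of c p] by simp
  then show ?thesis
    using poly_mat_ext[where q=p and m="Suc (degree p)" and M=M]
      poly_mat_ext[where q="smult c p" and m="Suc (degree p)" and M=M]
    by (simp only: coeff_smult scaleR_scaleR scaleR_sum_right)
qed

lemma poly_mat_0: "poly_mat 0 M = 0"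
  by (simp add: poly_mat_def)

lemma poly_mat_sum:
  fixes M :: "real^'n^'n"
  shows "finite S \<Longrightarrow> poly_mat (sum f S) M = (\<Sum>i\<in>S. poly_mat (f i) M)"
  by (induction S rule: finite_induct) (simp_all add: poly_mat_0 poly_mat_add)

lemma poly_mat_1:
  fixes M :: "real^'n^'n"
  shows "poly_mat 1 M = mat 1"
  by (simp add: poly_mat_def)

lemma poly_mat_const:
  fixes M :: "real^'n^'n"
  shows "poly_mat [:c:] M = c *\<^sub>R mat 1"
  by (simp add: poly_mat_def)

lemma poly_mat_pCons0:
  fixes M :: "real^'n^'n"
  shows "poly_mat (pCons 0 q) M = M ** poly_mat q M"
proof -
  let ?n = "Suc (Suc (degree q))"
  have d: "degree (pCons 0 q) < Suc ?n" using degree_pCons_le[of 0 q] by simp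
  have "poly_mat (pCons 0 q) M = (\<Sum>i<Suc ?n. coeff (pCons 0 q) i *\<^sub>R mat_pow M i)"
    by (rule poly_mat_ext[OF d])
  also have "\<dots> = (\<Sum>i<?n. coeff q i *\<^sub>R mat_pow M (Suc i))"
    by (subst sum.lessThan_Suc_shift) simp
  also have "\<dots> = M ** (\<Sum>i<?n. coeff q i *\<^sub>R mat_pow M i)"
    by (simp only: matrix_mul_sum[OF finite_lessThan] matrix_scalar_ac scalar_matrix_assoc[symmetric] mat_pow.simps)
  also have "\<dots> = M ** poly_mat q M"
    using poly_mat_ext[where q=q and m="Suc (Suc (degree q))" and M=M] by simp
  finally show ?thesis .
qed

lemma poly_mat_Xmult:
  fixes N :: "real^'n^'n"
  shows "poly_mat ([:w0, w1:] * q) N = (w0 *\<^sub>R mat 1 + w1 *\<^sub>R N) ** poly_mat q N"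
proof -
  have "[:w0, w1:] * q = smult w0 q + pCons 0 (smult w1 q)"
    by (simp add: mult_pCons_left)
  then show ?thesis
    by (simp add: poly_mat_add poly_mat_smult poly_mat_pCons0 matrix_add_rdistrib'
        matrix_scalar_ac scalar_matrix_assoc[symmetric])
qed

lemma poly_mat_chebU:
  fixes N :: "real^'n^'n"
  shows "poly_mat (pcompose (cheb_U n) [:w0, w1:]) N = cheb_U_mat n (w0 *\<^sub>R mat 1 + w1 *\<^sub>R N)"
proof (induction n rule: cheb_U.induct)
  case 1
  have "pcompose (1::real poly) [:w0,w1:] = [:1:]"
    by (rule poly_eq_poly_eq_iff[THEN iffD1]) (simp add: poly_pcompose fun_eq_iff)
  then show ?case by (simp add: poly_mat_const)
next
  case 2
  have "pcompose (cheb_U (Suc 0)) [:w0, w1:] = [:w0, w1:] * smult 2 1"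
    by (simp add: pcompose_pCons)
  then show ?case by (simp only: poly_mat_Xmult poly_mat_smult poly_mat_1 matrix_scalar_ac matrix_mul_rid) simp
next
  case (3 j)
  have "pcompose (cheb_U (Suc (Suc j))) [:w0, w1:] =
     [:w0, w1:] * smult 2 (pcompose (cheb_U (Suc j)) [:w0, w1:]) - pcompose (cheb_U j) [:w0, w1:]"
    by (rule poly_eq_poly_eq_iff[THEN iffD1]) (simp add: poly_pcompose algebra_simps fun_eq_iff)
  then show ?case using 3
    by (simp only: poly_mat_diff poly_mat_Xmult poly_mat_smult cheb_U_mat.simps matrix_scalar_ac scalar_matrix_assoc)
qed

theorem lemma3p1:
  fixes p s :: nat and eps dt :: real and A :: "real^'n^'n" and r :: "nat \<Rightarrow> real^'n"
  assumes "p \<in> {1, 2}" and "s \<ge> 1" and "p = 2 \<Longrightarrow> s \<ge> 2"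
    and "eps \<ge> 0" and "dt > 0"
  shows
    "(\<forall>k\<in>{1..s}. rkc_d p s eps dt A r k =
        (\<Sum>j=1..k. (rkc_b p s eps k / rkc_b p s eps j) *\<^sub>R
           (cheb_U_mat (k - j) (rkc_omega0 s eps *\<^sub>R mat 1 + (rkc_omega1 p s eps * dt) *\<^sub>R A) *v r j)))
   \<and> (\<forall>k\<in>{1..s}. \<forall>z::real.
        poly (rkc_Rbar p s eps k) z =
          (\<Sum>j=1..k. rkc_b p s eps k / rkc_b p s eps j
             * poly (cheb_U (k - j)) (rkc_omega0 s eps + rkc_omega1 p s eps * z)
             * (rkc_mu p s eps j + rkc_gamma p s eps j))
        \<and> (z \<noteq> 0 \<longrightarrow> (poly (rkc_R p s eps k) z - 1) / z = poly (rkc_Rbar p s eps k) z)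
        \<and> poly (rkc_Rtilde p s eps k) z =
          (\<Sum>j=2..k. rkc_b p s eps k / rkc_b p s eps j
             * poly (cheb_U (k - j)) (rkc_omega0 s eps + rkc_omega1 p s eps * z)
             * (rkc_mu p s eps j * rkc_c p s eps (j - 1)))
        \<and> (z \<noteq> 0 \<longrightarrow> (poly (rkc_R p s eps k) z - 1 - rkc_c p s eps k * z) / z^2
                       = poly (rkc_Rtilde p s eps k) z))
   \<and> (\<forall>rr :: real^'n. (\<forall>j\<in>{1..s}. r j = (rkc_mu p s eps j + rkc_gamma p s eps j) *\<^sub>R rr) \<longrightarrow>
        (\<forall>k\<in>{1..s}. rkc_d p s eps dt A r k = poly_mat (rkc_Rbar p s eps k) (dt *\<^sub>R A) *v rr))"
proof -
  have e: "eps \<ge> 0" by (rule assms(4))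
  let ?M = "rkc_omega0 s eps *\<^sub>R mat 1 + (rkc_omega1 p s eps * dt) *\<^sub>R A"
  have P1: "\<forall>k\<in>{1..s}. rkc_d p s eps dt A r k =
        (\<Sum>j=1..k. (rkc_b p s eps k / rkc_b p s eps j) *\<^sub>R (cheb_U_mat (k - j) ?M *v r j))"
    using part1[OF e] by auto
  have P2: "poly (rkc_Rbar p s eps k) z =
          (\<Sum>j=1..k. rkc_b p s eps k / rkc_b p s eps j
             * poly (cheb_U (k - j)) (rkc_omega0 s eps + rkc_omega1 p s eps * z)
             * (rkc_mu p s eps j + rkc_gamma p s eps j))
        \<and> (z \<noteq> 0 \<longrightarrow> (poly (rkc_R p s eps k) z - 1) / z = poly (rkc_Rbar p s eps k) z)
        \<and> poly (rkc_Rtilde p s eps k) z =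
          (\<Sum>j=2..k. rkc_b p s eps k / rkc_b p s eps j
             * poly (cheb_U (k - j)) (rkc_omega0 s eps + rkc_omega1 p s eps * z)
             * (rkc_mu p s eps j * rkc_c p s eps (j - 1)))
        \<and> (z \<noteq> 0 \<longrightarrow> (poly (rkc_R p s eps k) z - 1 - rkc_c p s eps k * z) / z^2
                       = poly (rkc_Rtilde p s eps k) z)" if k: "k \<in> {1..s}" for k z
  proof -
    have ks: "k \<le> s" using k by simp
    have a: "poly (rkc_R p s eps k - 1) z = poly ([:0, 1:] * Q1 p s eps k) z"
      by (simp only: R_Q1[OF e ks])
    have b: "poly (rkc_R p s eps k - 1 - [:0, rkc_c p s eps k:]) z = poly ([:0, 0, 1:] * Q2 p s eps k) z"
      by (simp only: R_Q2[OF e ks])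
    have a': "poly (rkc_R p s eps k) z - 1 = z * poly (Q1 p s eps k) z" using a by simp
    have b': "poly (rkc_R p s eps k) z - 1 - rkc_c p s eps k * z = z^2 * poly (Q2 p s eps k) z"
      using b by (simp add: algebra_simps power2_eq_square)
    have c1: "z \<noteq> 0 \<longrightarrow> (poly (rkc_R p s eps k) z - 1) / z = poly (rkc_Rbar p s eps k) z"
      unfolding Rbar_Q1[OF e ks] a' by simp
    have c2: "z \<noteq> 0 \<longrightarrow> (poly (rkc_R p s eps k) z - 1 - rkc_c p s eps k * z) / z^2 = poly (rkc_Rtilde p s eps k) z"
      unfolding Rtilde_Q2[OF e ks] b' by simp
    show ?thesis using c1 c2
      unfolding Rbar_Q1[OF e ks] Rtilde_Q2[OF e ks] poly_Q1 poly_Q2 by blast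
  qed
  have P3: "rkc_d p s eps dt A r k = poly_mat (rkc_Rbar p s eps k) (dt *\<^sub>R A) *v rr"
    if H: "\<forall>j\<in>{1..s}. r j = (rkc_mu p s eps j + rkc_gamma p s eps j) *\<^sub>R rr" and k: "k \<in> {1..s}" for rr k
  proof -
    have ks: "k \<le> s" using k by simp
    have "rkc_d p s eps dt A r k =
        (\<Sum>j=1..k. (rkc_b p s eps k / rkc_b p s eps j) *\<^sub>R (cheb_U_mat (k - j) ?M *v r j))"
      using P1 k by blast
    also have "\<dots> = (\<Sum>j=1..k. (rkc_b p s eps k / rkc_b p s eps j * (rkc_mu p s eps j + rkc_gamma p s eps j)) *\<^sub>R (cheb_U_mat (k - j) ?M *v rr))"
    proof (rule sum.cong)
      fix j assume "j \<in> {1..k}"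
      then have "r j = (rkc_mu p s eps j + rkc_gamma p s eps j) *\<^sub>R rr" using H ks by auto
      then show "(rkc_b p s eps k / rkc_b p s eps j) *\<^sub>R (cheb_U_mat (k - j) ?M *v r j) =
         (rkc_b p s eps k / rkc_b p s eps j * (rkc_mu p s eps j + rkc_gamma p s eps j)) *\<^sub>R (cheb_U_mat (k - j) ?M *v rr)"
        by (simp add: matrix_vector_mult_scaleR)
    qed simp
    also have "\<dots> = poly_mat (Q1 p s eps k) (dt *\<^sub>R A) *v rr"
      unfolding Q1_def poly_mat_sum[OF finite_atLeastAtMost] poly_mat_smult poly_mat_chebU
        sum_matrix_vector[OF finite_atLeastAtMost]
      by (simp add: scaleR_matrix_vector_assoc[symmetric] del: scaleR_scaleR) (simp add: scaleR_scaleR mult.commute)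
    finally show ?thesis using Rbar_Q1[OF e ks] by simp
  qed
  show ?thesis using P1 P2 P3 by blast
qed

end
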